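(* Let $E\subset\Delta_n$ be finite and suppose the market weight sequence $\{\mu(t)\}_{t\ge0}$ takes values in $E$. Let $\Theta=(\overline{\Delta}_n)^E$ be the set of all portfolio maps $\pi:E\to\overline{\Delta}_n$ with the topology of uniform (equivalently pointwise) convergence, and let $\nu_0$ be a Borel probability measure on $\Theta$ with full support. Then: (i) $\lim_{t\to\infty}\frac1t\log\frac{\widehat V(t)}{V^*(t)}=0$, i.e. Cover's portfolio $\widehat\pi$ satisfies the universality property. (ii) If $\mathbb P_t$ converges weakly to a probability measure $\mathbb P$ on $E\times E$, then $\{\nu_t\}_{t\ge0}$ satisfies the large deviation principle on $\Theta$ with the convex rate function $I(\pi)=W^*-W(\pi)$, where $W(\pi)=\lim_{t\to\infty}\frac1t\log V_\pi(t)$ and $W^*=\max_{\pi\in\Theta}W(\pi)$.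
   Context: $\Delta_n$ is the open unit simplex in $\mathbb R^n$ ($n\ge2$), $\overline{\Delta}_n$ the closed one. Relative value: $V_\pi(0)=1$, $V_\pi(t+1)=V_\pi(t)\sum_i\pi_i(\mu(t))\mu_i(t+1)/\mu_i(t)$. $\widehat V(t)=\int_\Theta V_\pi(t)\,d\nu_0(\pi)$, which is the relative value of Cover's portfolio $\widehat\pi(t)=\int_\Theta\pi(\mu(t))\,d\nu_t(\pi)$; $V^*(t)=\sup_{\pi\in\Theta}V_\pi(t)$; wealth distribution $\nu_t(B)=\frac1{\widehat V(t)}\int_BV_\pi(t)\,d\nu_0(\pi)$. $\mathbb P_t=\frac1t\sum_{s=0}^{t-1}\delta_{(\mu(s),\mu(s+1))}$. Full support: the smallest closed set of full $\nu_0$-measure is $\Theta$. LDP with rate $I$: for closed $F$, $\limsup_t\frac1t\log\nu_t(F)\le-\inf_FI$; for open $G$, $\liminf_t\frac1t\log\nu_t(G)\ge-\inf_GI$. *)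

theory Defs
  imports "HOL-Probability.Probability"
begin

definition open_simplex :: "(real^'n) set" where
  "open_simplex = {x. (\<forall>i. 0 < x $ i) \<and> (\<Sum>i\<in>UNIV. x $ i) = 1}"

definition closed_simplex :: "(real^'n) set" where
  "closed_simplex = {x. (\<forall>i. 0 \<le> x $ i) \<and> (\<Sum>i\<in>UNIV. x $ i) = 1}"

text \<open>The finite state set E is indexed by a finite type 'e via an injective map
  w : 'e => open simplex; a portfolio map pi : E -> closed simplex is an element
  of real^'n^'e (pi $ e is the portfolio used when the market weight is w e).
  The topology of real^'n^'e is the topology of uniform (= pointwise) convergence.\<close>
definition Theta :: "(real^'n^'e::finite) set" where
  "Theta = {p. \<forall>e. p $ e \<in> closed_simplex}"

fun relval :: "('e::finite \<Rightarrow> real^'n) \<Rightarrow> (nat \<Rightarrow> 'e) \<Rightarrow> real^'n^'e \<Rightarrow> nat \<Rightarrow> real" where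
  "relval w mu p 0 = 1"
| "relval w mu p (Suc t) = relval w mu p t *
     (\<Sum>i\<in>UNIV. (p $ mu t) $ i * (w (mu (Suc t)) $ i / w (mu t) $ i))"

text \<open>Relative value of Cover's portfolio: integral of V_pi(t) against nu_0.\<close>
definition Vhat :: "('e::finite \<Rightarrow> real^'n) \<Rightarrow> (nat \<Rightarrow> 'e) \<Rightarrow> (real^'n^'e) measure \<Rightarrow> nat \<Rightarrow> real" where
  "Vhat w mu nu0 t = (\<integral>p. relval w mu p t \<partial>nu0)"

definition Vstar :: "('e::finite \<Rightarrow> real^'n) \<Rightarrow> (nat \<Rightarrow> 'e) \<Rightarrow> nat \<Rightarrow> real" where
  "Vstar w mu t = (SUP p\<in>Theta. relval w mu p t)"

definition wealth_dist :: "('e::finite \<Rightarrow> real^'n) \<Rightarrow> (nat \<Rightarrow> 'e) \<Rightarrow> (real^'n^'e) measure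
    \<Rightarrow> nat \<Rightarrow> (real^'n^'e) measure" where
  "wealth_dist w mu nu0 t = density nu0 (\<lambda>p. ennreal (relval w mu p t / Vhat w mu nu0 t))"

definition full_support :: "'a::topological_space measure \<Rightarrow> 'a set \<Rightarrow> bool" where
  "full_support M S \<longleftrightarrow> closed S \<and> S \<in> sets M \<and> emeasure M S = emeasure M (space M) \<and>
     (\<forall>F. closed F \<and> F \<in> sets M \<and> emeasure M F = emeasure M (space M) \<longrightarrow> S \<subseteq> F)"

text \<open>Empirical pair measure P_t and weak convergence on the finite (discrete) space E x E:
  convergence of the integrals of every (necessarily bounded continuous) function.\<close>
definition emp_integral :: "(nat \<Rightarrow> 'e) \<Rightarrow> nat \<Rightarrow> ('e \<times> 'e \<Rightarrow> real) \<Rightarrow> real" where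
  "emp_integral mu t f = (1 / real t) * (\<Sum>s<t. f (mu s, mu (Suc s)))"

definition emp_weak_conv :: "(nat \<Rightarrow> 'e::finite) \<Rightarrow> ('e \<times> 'e) pmf \<Rightarrow> bool" where
  "emp_weak_conv mu P \<longleftrightarrow>
     (\<forall>f. (\<lambda>t. emp_integral mu t f) \<longlonglongrightarrow> measure_pmf.expectation P f)"

definition ln_ereal :: "real \<Rightarrow> ereal" where
  "ln_ereal x = (if x \<le> 0 then -\<infinity> else ereal (ln x))"

definition rate_function :: "'a::topological_space set \<Rightarrow> ('a \<Rightarrow> real) \<Rightarrow> bool" where
  "rate_function S I \<longleftrightarrow> (\<forall>x\<in>S. 0 \<le> I x) \<and> (\<forall>c. closed {x\<in>S. I x \<le> c})"

text \<open>Large deviation principle on the closed set S (measures concentrated on S;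
  closed/open subsets of S are traces F \<inter> S of closed/open sets F of the ambient space).\<close>
definition LDP :: "(nat \<Rightarrow> 'a::topological_space measure) \<Rightarrow> 'a set \<Rightarrow> ('a \<Rightarrow> real) \<Rightarrow> bool" where
  "LDP nu S I \<longleftrightarrow>
     (\<forall>F. closed F \<longrightarrow>
        limsup (\<lambda>t. ereal (1 / real t) * ln_ereal (measure (nu t) (F \<inter> S)))
          \<le> - (INF x\<in>F \<inter> S. ereal (I x))) \<and>
     (\<forall>G. open G \<longrightarrow>
        - (INF x\<in>G \<inter> S. ereal (I x))
          \<le> liminf (\<lambda>t. ereal (1 / real t) * ln_ereal (measure (nu t) (G \<inter> S))))"

end

theory Submission
  imports Defs
begin

definition gg :: "('e::finite \<Rightarrow> real^'n) \<Rightarrow> real^'n^'e \<Rightarrow> 'e \<Rightarrow> 'e \<Rightarrow> real" where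
  "gg w p e e' = (\<Sum>i\<in>UNIV. (p $ e) $ i * (w e' $ i / w e $ i))"

lemma relval_Suc_gg: "relval w mu p (Suc t) = relval w mu p t * gg w p (mu t) (mu (Suc t))"
  by (simp add: gg_def)

locale setting =
  fixes w :: "'e::finite \<Rightarrow> real^'n" and mu :: "nat \<Rightarrow> 'e" and nu0 :: "(real^'n^'e) measure"
  assumes w_simplex: "\<And>e. w e \<in> open_simplex"
    and nu0_borel: "sets nu0 = sets borel"
    and nu0_prob: "prob_space nu0"
    and nu0_supp: "full_support nu0 Theta"
begin

definition R :: "real set" where "R = (\<lambda>(e,e',i). w e' $ i / w e $ i) ` UNIV"
definition rmin where "rmin = Min R"
definition rmax where "rmax = Max R"

lemma w_pos: "0 < w e $ i" using w_simplex[of e] by (auto simp: open_simplex_def)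

lemma R_fin: "finite R" and R_ne: "R \<noteq> {}" by (auto simp: R_def)

lemma R_mem: "w e' $ i / w e $ i \<in> R" unfolding R_def by (rule image_eqI[where x="(e,e',i)"]) auto

lemma rmin_le: "rmin \<le> w e' $ i / w e $ i" unfolding rmin_def using R_fin R_mem by simp
lemma rmax_ge: "w e' $ i / w e $ i \<le> rmax" unfolding rmax_def using R_fin R_mem by simp
lemma rmin_pos: "0 < rmin" unfolding rmin_def using R_fin R_ne
  by (subst Min_gr_iff) (auto simp: R_def w_pos)
lemma rmin_le_rmax: "rmin \<le> rmax" using rmin_le[of undefined undefined undefined] rmax_ge[of undefined undefined undefined] by linarith
lemma rmax_pos: "0 < rmax" using rmin_pos rmin_le_rmax by linarith

lemma Theta_simplex: "p \<in> Theta \<Longrightarrow> 0 \<le> (p $ e) $ i" "p \<in> Theta \<Longrightarrow> (\<Sum>i\<in>UNIV. (p $ e) $ i) = 1"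
  by (auto simp: Theta_def closed_simplex_def)

lemma gg_bounds: assumes "p \<in> Theta" shows "rmin \<le> gg w p e e'" "gg w p e e' \<le> rmax"
proof -
  have "rmin = (\<Sum>i\<in>UNIV. (p $ e) $ i * rmin)" using Theta_simplex(2)[OF assms, of e]
    by (simp add: sum_distrib_right[symmetric])
  also have "\<dots> \<le> gg w p e e'" unfolding gg_def
    by (intro sum_mono mult_left_mono rmin_le Theta_simplex(1)[OF assms])
  finally show "rmin \<le> gg w p e e'" .
  have "gg w p e e' \<le> (\<Sum>i\<in>UNIV. (p $ e) $ i * rmax)" unfolding gg_def
    by (intro sum_mono mult_left_mono rmax_ge Theta_simplex(1)[OF assms])
  also have "\<dots> = rmax" using Theta_simplex(2)[OF assms, of e]
    by (simp add: sum_distrib_right[symmetric])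
  finally show "gg w p e e' \<le> rmax" .
qed

lemma gg_pos: "p \<in> Theta \<Longrightarrow> 0 < gg w p e e'" using gg_bounds(1) rmin_pos by (meson less_le_trans)

lemma relval_pos: "p \<in> Theta \<Longrightarrow> 0 < relval w mu p t"
  by (induction t) (auto simp: relval_Suc_gg gg_pos simp del: relval.simps(2))

lemma relval_le: "p \<in> Theta \<Longrightarrow> relval w mu p t \<le> rmax ^ t"
proof (induction t)
  case (Suc t)
  show ?case unfolding relval_Suc_gg power_Suc2
    by (rule mult_mono) (use Suc relval_pos[OF Suc(2)] gg_bounds(2)[OF Suc(2)] gg_pos[OF Suc(2)] rmax_pos in \<open>auto intro: less_imp_le\<close>)
qed simp

lemma Theta_closed: "closed (Theta :: (real^'n^'e) set)"
proof -
  have eq: "(Theta :: (real^'n^'e) set) = (\<Inter>e. {p. p $ e \<in> closed_simplex})" by (auto simp: Theta_def)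
  moreover have cl: "closed {p :: real^'n^'e. p $ e \<in> closed_simplex}" for e
  proof -
    have "{p :: real^'n^'e. p $ e \<in> closed_simplex} = (\<Inter>i. {p. 0 \<le> (p $ e) $ i}) \<inter> {p. (\<Sum>i\<in>UNIV. (p $ e) $ i) = 1}"
      by (auto simp: closed_simplex_def)
    moreover have "closed {p :: real^'n^'e. 0 \<le> (p $ e) $ i}" for i
      by (intro closed_Collect_le continuous_intros)
    moreover have "closed {p :: real^'n^'e. (\<Sum>i\<in>UNIV. (p $ e) $ i) = 1}"
      by (intro closed_Collect_eq continuous_intros)
    ultimately show ?thesis by (auto intro!: closed_Int closed_INT)
  qed
  show ?thesis unfolding eq by (rule closed_INT) (use cl in blast)
qed

lemma Theta_bounded: "bounded (Theta :: (real^'n^'e) set)"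
proof -
  have "norm p \<le> (\<Sum>e\<in>(UNIV::'e set). \<Sum>i\<in>(UNIV::'n set). (1::real))" if "p \<in> Theta" for p :: "real^'n^'e"
  proof -
    have "norm p \<le> (\<Sum>e\<in>UNIV. norm (p $ e))" by (simp add: norm_vec_def L2_set_le_sum)
    also have "\<dots> \<le> (\<Sum>e\<in>(UNIV::'e set). \<Sum>i\<in>(UNIV::'n set). (1::real))"
    proof (rule sum_mono)
      fix e
      have "norm (p $ e) \<le> (\<Sum>i\<in>UNIV. norm ((p $ e) $ i))" by (simp add: norm_vec_def L2_set_le_sum)
      also have "\<dots> \<le> (\<Sum>i\<in>(UNIV::'n set). (1::real))"
      proof (rule sum_mono)
        fix i
        have "(p $ e) $ i \<le> (\<Sum>j\<in>UNIV. (p $ e) $ j)"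
          by (rule member_le_sum) (auto intro: Theta_simplex(1)[OF that])
        then show "norm ((p $ e) $ i) \<le> 1" using Theta_simplex(1)[OF that, of e i] Theta_simplex(2)[OF that, of e] by simp
      qed
      finally show "norm (p $ e) \<le> (\<Sum>i\<in>(UNIV::'n set). (1::real))" .
    qed
    finally show ?thesis .
  qed
  then show ?thesis unfolding bounded_iff by blast
qed

lemma Theta_compact: "compact (Theta :: (real^'n^'e) set)"
  using Theta_closed Theta_bounded by (simp add: compact_eq_bounded_closed)

lemma Theta_ne: "(Theta :: (real^'n^'e) set) \<noteq> {}"
proof -
  have "(\<chi> e. \<chi> i. 1 / real CARD('n)) \<in> (Theta :: (real^'n^'e) set)"
    by (auto simp: Theta_def closed_simplex_def)
  then show ?thesis by blast
qed

lemma Theta_convex: "convex (Theta :: (real^'n^'e) set)"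
  unfolding convex_def Theta_def closed_simplex_def
  by (auto simp: sum.distrib sum_distrib_left[symmetric] intro!: add_nonneg_nonneg mult_nonneg_nonneg)

end

sublocale setting \<subseteq> P: prob_space nu0 by (rule nu0_prob)

context setting begin

lemma comp_dist: "\<bar>(q $ e) $ i - (p $ e) $ i\<bar> \<le> dist q p"
proof -
  have "\<bar>((q - p) $ e) $ i\<bar> \<le> norm ((q - p) $ e)" by (rule component_le_norm_cart)
  also have "\<dots> \<le> norm (q - p)" by (rule Finite_Cartesian_Product.norm_nth_le)
  finally show ?thesis by (simp add: dist_norm)
qed

lemma gg_perturb:
  assumes "dist q p \<le> eta"
  shows "gg w p e e' - eta * real CARD('n) * rmax \<le> gg w q e e'"
proof -
  have "gg w p e e' - gg w q e e' = (\<Sum>i\<in>UNIV. ((p $ e) $ i - (q $ e) $ i) * (w e' $ i / w e $ i))"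
    unfolding gg_def sum_subtractf[symmetric] by (rule sum.cong) (simp_all add: algebra_simps)
  also have "\<dots> \<le> (\<Sum>i\<in>(UNIV::'n set). eta * rmax)"
  proof (rule sum_mono)
    fix i
    have r0: "0 \<le> w e' $ i / w e $ i" using w_pos[of e' i] w_pos[of e i] by simp
    have "((p $ e) $ i - (q $ e) $ i) * (w e' $ i / w e $ i) \<le> \<bar>(p $ e) $ i - (q $ e) $ i\<bar> * (w e' $ i / w e $ i)"
      using r0 by (intro mult_right_mono) auto
    also have "\<dots> \<le> eta * rmax"
    proof (rule mult_mono)
      show "\<bar>(p $ e) $ i - (q $ e) $ i\<bar> \<le> eta" using comp_dist[of q e i p] assms by linarith
      show "0 \<le> eta" using assms zero_le_dist[of q p] by linarith
    qed (use rmax_ge r0 in auto)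
    finally show "((p $ e) $ i - (q $ e) $ i) * (w e' $ i / w e $ i) \<le> eta * rmax" .
  qed
  finally have "gg w p e e' - gg w q e e' \<le> real CARD('n) * (eta * rmax)" by simp
  moreover have "real CARD('n) * (eta * rmax) = eta * real CARD('n) * rmax" by simp
  ultimately show ?thesis by linarith
qed

lemma gg_ratio:
  assumes "p \<in> Theta" "0 \<le> d" "dist q p \<le> d * rmin / (real CARD('n) * rmax)"
  shows "(1 - d) * gg w p e e' \<le> gg w q e e'"
proof -
  have "d * rmin / (real CARD('n) * rmax) * real CARD('n) * rmax = d * rmin"
    using rmax_pos by (simp add: field_simps)
  then have "gg w p e e' - d * rmin \<le> gg w q e e'" using gg_perturb[OF assms(3), of e e'] by simp
  moreover have "d * rmin \<le> d * gg w p e e'" using assms(2) gg_bounds(1)[OF assms(1)] by (rule mult_left_mono[rotated])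
  ultimately show ?thesis by (simp add: algebra_simps)
qed

lemma relval_ratio:
  assumes "p \<in> Theta" "0 \<le> d" "d \<le> 1" "q \<in> Theta" "dist q p \<le> d * rmin / (real CARD('n) * rmax)"
  shows "(1 - d) ^ t * relval w mu p t \<le> relval w mu q t"
proof (induction t)
  case (Suc t)
  have nn: "0 \<le> (1 - d) * gg w p (mu t) (mu (Suc t))"
    using assms gg_pos[OF assms(1), of "mu t" "mu (Suc t)"] by (intro mult_nonneg_nonneg) auto
  have "(1 - d) ^ Suc t * relval w mu p (Suc t) = ((1 - d) ^ t * relval w mu p t) * ((1 - d) * gg w p (mu t) (mu (Suc t)))"
    by (simp add: relval_Suc_gg del: relval.simps)
  also have "\<dots> \<le> relval w mu q t * gg w q (mu t) (mu (Suc t))"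
    by (rule mult_mono[OF Suc gg_ratio[OF assms(1,2,5)] _ nn]) (use relval_pos[OF assms(4), of t] in simp)
  finally show ?case by (simp add: relval_Suc_gg del: relval.simps)
qed simp

lemma relval_cont: "continuous_on UNIV (\<lambda>p. relval w mu p t)"
proof (induction t)
  case (Suc t)
  show ?case unfolding relval_Suc_gg gg_def by (intro continuous_intros Suc)
qed simp

lemma meas_nu0: "f \<in> borel_measurable borel \<Longrightarrow> f \<in> borel_measurable nu0"
  using nu0_borel by (simp cong: measurable_cong_sets)

lemma sets_nu0: "A \<in> sets borel \<Longrightarrow> A \<in> sets nu0" using nu0_borel by simp

lemma relval_meas[measurable]: "(\<lambda>p. relval w mu p t) \<in> borel_measurable nu0"
  by (rule meas_nu0, rule borel_measurable_continuous_onI, rule relval_cont)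

lemma Theta_sets[measurable]: "Theta \<in> sets nu0"
  using sets_nu0 Theta_closed by auto

lemma supp: "closed (Theta :: (real^'n^'e) set)" "emeasure nu0 Theta = emeasure nu0 (space nu0)"
  "\<And>F. closed F \<Longrightarrow> F \<in> sets nu0 \<Longrightarrow> emeasure nu0 F = emeasure nu0 (space nu0) \<Longrightarrow> Theta \<subseteq> F"
  using nu0_supp unfolding full_support_def by auto

lemma prob_Theta: "P.prob Theta = 1"
  using supp(2) P.emeasure_space_1 by (simp add: P.emeasure_eq_measure)

lemma AE_Theta: "AE p in nu0. p \<in> Theta"
  by (rule P.AE_prob_1[OF prob_Theta])

lemma relval_int: "integrable nu0 (\<lambda>p. f p * relval w mu p t)" if "f \<in> borel_measurable nu0" "\<And>p. \<bar>f p\<bar> \<le> 1"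
proof (rule P.integrable_const_bound[where B="rmax ^ t"])
  show "AE x in nu0. norm (f x * relval w mu x t) \<le> rmax ^ t"
    using AE_Theta
  proof eventually_elim
    case (elim x)
    have "\<bar>f x\<bar> * relval w mu x t \<le> 1 * rmax ^ t"
      by (rule mult_mono) (use that relval_le[OF elim] relval_pos[OF elim] in \<open>auto intro: less_imp_le\<close>)
    then show ?case using relval_pos[OF elim] by (simp add: abs_mult abs_of_pos[OF relval_pos[OF elim]])
  qed
qed (use that in simp)

lemma relval_int_ind: "A \<in> sets nu0 \<Longrightarrow> integrable nu0 (\<lambda>p. indicator A p * relval w mu p t)"
  by (rule relval_int) (auto simp: indicator_def)

lemma relval_int1: "integrable nu0 (\<lambda>p. relval w mu p t)"
  using relval_int[of "\<lambda>_. 1"] by simp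

lemma pos_open:
  assumes "open U" "U \<inter> Theta \<noteq> {}"
  shows "0 < P.prob (U \<inter> Theta)"
proof (rule ccontr)
  assume "\<not> 0 < P.prob (U \<inter> Theta)"
  then have z: "P.prob (U \<inter> Theta) = 0" using measure_nonneg[of nu0 "U \<inter> Theta"] by linarith
  have Us: "U \<in> sets nu0" using sets_nu0 assms(1) by auto
  have "P.prob (Theta - U) = P.prob Theta - P.prob (Theta \<inter> U)"
    using P.finite_measure_Diff'[of Theta U] Us by simp
  then have "P.prob (Theta - U) = 1" using z prob_Theta by (simp add: Int_commute)
  then have "emeasure nu0 (Theta - U) = emeasure nu0 (space nu0)"
    using P.emeasure_space_1 by (simp add: P.emeasure_eq_measure)
  moreover have "closed (Theta - U)" using Theta_closed assms(1) by (intro closed_Diff)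
  moreover have "Theta - U \<in> sets nu0" using Us by auto
  ultimately have "Theta \<subseteq> Theta - U" using supp(3) by blast
  then show False using assms(2) by blast
qed

lemma ball_mass:
  assumes "0 < eta"
  shows "\<exists>m>0. \<forall>p\<in>Theta. m \<le> P.prob (ball p eta \<inter> Theta)"
proof -
  have cov: "(Theta :: (real^'n^'e) set) \<subseteq> (\<Union>c\<in>Theta. ball c (eta/2))"
  proof
    fix x :: "real^'n^'e" assume "x \<in> Theta"
    then show "x \<in> (\<Union>c\<in>Theta. ball c (eta/2))" using assms by (intro UN_I[of x]) auto
  qed
  have "\<exists>C. C \<subseteq> (Theta :: (real^'n^'e) set) \<and> finite C \<and> Theta \<subseteq> (\<Union>c\<in>C. ball c (eta/2))"
    apply (rule compactE_image[OF Theta_compact, of Theta "\<lambda>c. ball c (eta/2)"])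
      apply (rule open_ball)
     apply (rule cov)
    apply (rule exI, rule conjI, assumption, rule conjI, assumption, assumption)
    done
  then obtain C where C: "C \<subseteq> (Theta :: (real^'n^'e) set)" "finite C" "Theta \<subseteq> (\<Union>c\<in>C. ball c (eta/2))"
    by blast
  define m where "m = Min (insert 1 ((\<lambda>c. P.prob (ball c (eta/2) \<inter> Theta)) ` C))"
  have "0 < m" unfolding m_def using C(2)
  proof (subst Min_gr_iff)
    show "\<forall>a\<in>insert 1 ((\<lambda>c. P.prob (ball c (eta / 2) \<inter> Theta)) ` C). 0 < a"
    proof
      fix a assume "a \<in> insert 1 ((\<lambda>c. P.prob (ball c (eta / 2) \<inter> Theta)) ` C)"
      then consider "a = 1" | c where "c \<in> C" "a = P.prob (ball c (eta / 2) \<inter> Theta)" by auto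
      then show "0 < a"
      proof cases
        case 2
        then have "c \<in> ball c (eta/2) \<inter> Theta" using C(1) assms by auto
        then have "ball c (eta/2) \<inter> Theta \<noteq> {}" by blast
        then show ?thesis using 2 pos_open[of "ball c (eta/2)"] by simp
      qed simp
    qed
  qed auto
  moreover have "m \<le> P.prob (ball p eta \<inter> Theta)" if p: "p \<in> Theta" for p
  proof -
    obtain c where c: "c \<in> C" "p \<in> ball c (eta/2)" using C(3) p by auto
    have "m \<le> P.prob (ball c (eta/2) \<inter> Theta)" unfolding m_def using C(2) c(1) by simp
    also have "\<dots> \<le> P.prob (ball p eta \<inter> Theta)"
    proof (rule P.finite_measure_mono)
      show "ball c (eta / 2) \<inter> Theta \<subseteq> ball p eta \<inter> Theta"
      proof safe
        fix x assume "x \<in> ball c (eta / 2)"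
        then have "dist p x < eta" using c(2) dist_triangle_half_l[of p c eta x] by (simp add: dist_commute)
        then show "x \<in> ball p eta" by simp
      qed
      show "ball p eta \<inter> Theta \<in> sets nu0" by (rule sets.Int[OF _ Theta_sets]) (simp add: nu0_borel)
    qed
    finally show ?thesis .
  qed
  ultimately show ?thesis by (intro exI[of _ m]) auto
qed

end

context setting begin

abbreviation TH :: "(real^'n^'e) set" where "TH \<equiv> Theta"

lemma int_lower:
  assumes "A \<in> sets nu0" "B \<in> sets nu0" "B \<inter> TH \<subseteq> A" "0 \<le> L" "\<And>x. x \<in> B \<inter> TH \<Longrightarrow> L \<le> relval w mu x t"
  shows "P.prob (B \<inter> TH) * L \<le> (\<integral>x. indicator A x * relval w mu x t \<partial>nu0)"
proof -
  have BT: "B \<inter> TH \<in> sets nu0" using assms(2) Theta_sets by auto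
  have "P.prob (B \<inter> TH) * L = (\<integral>x. indicator (B \<inter> TH) x * L \<partial>nu0)"
    using BT by simp
  also have "\<dots> \<le> (\<integral>x. indicator A x * relval w mu x t \<partial>nu0)"
  proof (rule integral_mono_AE)
    show "integrable nu0 (\<lambda>x. indicator (B \<inter> TH) x * L)"
      using BT by (intro integrable_mult_left integrable_real_indicator) (auto simp: P.emeasure_eq_measure)
    show "integrable nu0 (\<lambda>x. indicator A x * relval w mu x t)" using assms(1) by (rule relval_int_ind)
    show "AE x in nu0. indicator (B \<inter> TH) x * L \<le> indicator A x * relval w mu x t"
      using AE_Theta
    proof eventually_elim
      case (elim x)
      show ?case
      proof (cases "x \<in> B")
        case True
        then show ?thesis using elim assms(3) assms(5)[of x] by (auto simp: indicator_def)
      next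
        case False
        then show ?thesis using relval_pos[OF elim, of t] by (auto simp: indicator_def)
      qed
    qed
  qed
  finally show ?thesis .
qed

lemma int_upper:
  assumes "A \<in> sets nu0" "0 \<le> U" "\<And>x. x \<in> A \<inter> TH \<Longrightarrow> relval w mu x t \<le> U"
  shows "(\<integral>x. indicator A x * relval w mu x t \<partial>nu0) \<le> U"
proof -
  have "(\<integral>x. indicator A x * relval w mu x t \<partial>nu0) \<le> (\<integral>x. U \<partial>nu0)"
  proof (rule integral_mono_AE)
    show "integrable nu0 (\<lambda>x. indicator A x * relval w mu x t)" using assms(1) by (rule relval_int_ind)
    show "integrable nu0 (\<lambda>x. U)" by simp
    show "AE x in nu0. indicator A x * relval w mu x t \<le> U"
      using AE_Theta
    proof eventually_elim
      case (elim x)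
      then show ?case using assms(2) assms(3)[of x] by (auto simp: indicator_def)
    qed
  qed
  also have "\<dots> = U" using P.prob_space by simp
  finally show ?thesis .
qed

lemma Vhat_ind: "Vhat w mu nu0 t = (\<integral>x. indicator UNIV x * relval w mu x t \<partial>nu0)"
  by (simp add: Vhat_def)

lemma UNIV_sets: "UNIV \<in> sets nu0" using nu0_borel by simp

lemma Vstar_bdd: "bdd_above ((\<lambda>p. relval w mu p t) ` TH)"
  using relval_le by (intro bdd_aboveI[of _ "rmax ^ t"]) auto

lemma Vstar_ge: "p \<in> TH \<Longrightarrow> relval w mu p t \<le> Vstar w mu t"
  unfolding Vstar_def by (rule cSUP_upper[OF _ Vstar_bdd])

lemma Vstar_le: "(\<And>p. p \<in> TH \<Longrightarrow> relval w mu p t \<le> U) \<Longrightarrow> Vstar w mu t \<le> U"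
  unfolding Vstar_def by (rule cSUP_least[OF Theta_ne])

lemma Vstar_pos: "0 < Vstar w mu t"
proof -
  obtain p where "p \<in> TH" using Theta_ne by blast
  then show ?thesis using relval_pos[of p t] Vstar_ge[of p t] by linarith
qed

lemma Vhat_le_Vstar: "Vhat w mu nu0 t \<le> Vstar w mu t"
  unfolding Vhat_ind using UNIV_sets by (rule int_upper) (use Vstar_pos Vstar_ge in \<open>auto intro: less_imp_le\<close>)

lemma eta_pos: "0 < d \<Longrightarrow> 0 < d * rmin / (real CARD('n) * rmax)"
  using rmin_pos rmax_pos by simp

lemma Vhat_lower:
  assumes "0 < d" "d < 1"
  shows "\<exists>m>0. \<forall>t. \<forall>p\<in>TH. m * ((1 - d) ^ t * relval w mu p t) \<le> Vhat w mu nu0 t"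
proof -
  define eta where "eta = d * rmin / (real CARD('n) * rmax)"
  have eta: "0 < eta" unfolding eta_def using eta_pos assms by simp
  obtain m where m: "m > 0" "\<And>p. p \<in> TH \<Longrightarrow> m \<le> P.prob (ball p eta \<inter> TH)"
    using ball_mass[OF eta] by blast
  have "m * ((1 - d) ^ t * relval w mu p t) \<le> Vhat w mu nu0 t" if p: "p \<in> TH" for t p
  proof -
    have L: "0 \<le> (1 - d) ^ t * relval w mu p t" using relval_pos[OF p, of t] assms by simp
    have "m * ((1 - d) ^ t * relval w mu p t) \<le> P.prob (ball p eta \<inter> TH) * ((1 - d) ^ t * relval w mu p t)"
      by (rule mult_right_mono[OF m(2)[OF p] L])
    also have "\<dots> \<le> Vhat w mu nu0 t" unfolding Vhat_ind
    proof (rule int_lower[OF UNIV_sets _ _ L])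
      show "ball p eta \<in> sets nu0" by (simp add: nu0_borel)
      fix x assume x: "x \<in> ball p eta \<inter> TH"
      show "(1 - d) ^ t * relval w mu p t \<le> relval w mu x t"
        by (rule relval_ratio[OF p]) (use x assms in \<open>auto simp: eta_def dist_commute\<close>)
    qed auto
    finally show ?thesis .
  qed
  then show ?thesis using m(1) by blast
qed

lemma Vhat_pos: "0 < Vhat w mu nu0 t"
proof -
  obtain m where m: "m > 0" "\<And>t p. p \<in> TH \<Longrightarrow> m * ((1 - 1/2) ^ t * relval w mu p t) \<le> Vhat w mu nu0 t"
    using Vhat_lower[of "1/2"] by auto
  obtain p where p: "p \<in> TH" using Theta_ne by blast
  have "0 < m * ((1 - 1/2) ^ t * relval w mu p t)" using m(1) relval_pos[OF p, of t] by simp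
  then show ?thesis using m(2)[OF p, of t] by linarith
qed

theorem universality: "(\<lambda>t. (1 / real t) * ln (Vhat w mu nu0 t / Vstar w mu t)) \<longlonglongrightarrow> 0"
  unfolding lim_sequentially
proof (intro allI impI)
  fix r :: real assume r: "0 < r"
  define d where "d = 1 - exp (- (r/2))"
  have d: "0 < d" "d < 1" using r by (auto simp: d_def)
  have ld: "ln (1 - d) = - (r/2)" by (simp add: d_def)
  obtain m where m: "m > 0" "\<And>t p. p \<in> TH \<Longrightarrow> m * ((1 - d) ^ t * relval w mu p t) \<le> Vhat w mu nu0 t"
    using Vhat_lower[OF d] by auto
  have "(\<lambda>t. ln m / real t) \<longlonglongrightarrow> 0" by (rule lim_const_over_n)
  then have "\<exists>N. \<forall>t\<ge>N. dist (ln m / real t) 0 < r/2"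
    unfolding lim_sequentially using r by (meson half_gt_zero)
  then obtain N where N: "\<And>t. t \<ge> N \<Longrightarrow> \<bar>ln m / real t\<bar> < r/2"
    by (auto simp: dist_real_def)
  show "\<exists>no. \<forall>t\<ge>no. dist ((1 / real t) * ln (Vhat w mu nu0 t / Vstar w mu t)) 0 < r"
  proof (intro exI allI impI)
    fix t assume t: "t \<ge> max N 1"
    have tpos: "0 < real t" using t by simp
    have Vh: "0 < Vhat w mu nu0 t" by (rule Vhat_pos)
    have Vs: "0 < Vstar w mu t" by (rule Vstar_pos)
    have up: "ln (Vhat w mu nu0 t / Vstar w mu t) \<le> 0"
      using Vh Vs Vhat_le_Vstar[of t] by (simp add: ln_div)
    have "m * ((1 - d) ^ t * Vstar w mu t) \<le> Vhat w mu nu0 t"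
    proof -
      have "Vstar w mu t \<le> Vhat w mu nu0 t / (m * (1 - d) ^ t)"
      proof (rule Vstar_le)
        fix p assume p: "p \<in> TH"
        show "relval w mu p t \<le> Vhat w mu nu0 t / (m * (1 - d) ^ t)"
          using m(2)[OF p, of t] m(1) d by (simp add: field_simps)
      qed
      then show ?thesis using m(1) d by (simp add: field_simps)
    qed
    then have "m * (1 - d) ^ t \<le> Vhat w mu nu0 t / Vstar w mu t" using Vs by (simp add: field_simps)
    then have "ln (m * (1 - d) ^ t) \<le> ln (Vhat w mu nu0 t / Vstar w mu t)"
      using m(1) d Vh Vs by (subst ln_le_cancel_iff) auto
    also have "ln (m * (1 - d) ^ t) = ln m + real t * ln (1 - d)"
      using m(1) d by (simp add: ln_mult ln_realpow)
    finally have lo: "ln m + real t * ln (1 - d) \<le> ln (Vhat w mu nu0 t / Vstar w mu t)" .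
    have "ln m / real t - r/2 \<le> (1 / real t) * ln (Vhat w mu nu0 t / Vstar w mu t)"
    proof -
      have "(ln m + real t * ln (1 - d)) / real t \<le> ln (Vhat w mu nu0 t / Vstar w mu t) / real t"
        using lo tpos by (simp add: divide_right_mono)
      moreover have "(ln m + real t * ln (1 - d)) / real t = ln m / real t - r/2"
        using tpos ld by (simp add: field_simps)
      ultimately show ?thesis by simp
    qed
    moreover have "(1 / real t) * ln (Vhat w mu nu0 t / Vstar w mu t) \<le> 0"
      using up tpos by (simp add: divide_nonpos_pos)
    moreover have "- (r/2) < ln m / real t"
    proof -
      have a: "\<bar>ln m / real t\<bar> < r/2" by (rule N) (use t in simp)
      then show ?thesis unfolding abs_less_iff by linarith
    qed
    ultimately have "- r < (1 / real t) * ln (Vhat w mu nu0 t / Vstar w mu t)"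
      "(1 / real t) * ln (Vhat w mu nu0 t / Vstar w mu t) \<le> 0" by linarith+
    then show "dist ((1 / real t) * ln (Vhat w mu nu0 t / Vstar w mu t)) 0 < r"
      unfolding dist_real_def using r by linarith
  qed
qed

end

locale setting2 = setting w mu nu0 for w :: "'e::finite \<Rightarrow> real^'n" and mu nu0 +
  fixes P :: "('e \<times> 'e) pmf"
  assumes conv: "emp_weak_conv mu P"
begin

definition hh :: "real^'n^'e \<Rightarrow> 'e \<times> 'e \<Rightarrow> real" where
  "hh p x = ln (gg w p (fst x) (snd x))"

definition Wf :: "real^'n^'e \<Rightarrow> real" where
  "Wf p = measure_pmf.expectation P (hh p)"

definition freq :: "nat \<Rightarrow> 'e \<times> 'e \<Rightarrow> real" where
  "freq t x = emp_integral mu t (\<lambda>y. if y = x then 1 else 0)"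

lemma relval_exp: "p \<in> TH \<Longrightarrow> relval w mu p t = exp (\<Sum>s<t. hh p (mu s, mu (Suc s)))"
proof (induction t)
  case (Suc t)
  show ?case using Suc gg_pos[OF Suc(2), of "mu t" "mu (Suc t)"]
    by (simp add: relval_Suc_gg exp_add hh_def del: relval.simps)
qed simp

lemma relval_exp2: "p \<in> TH \<Longrightarrow> relval w mu p t = exp (real t * emp_integral mu t (hh p))"
  by (simp add: relval_exp emp_integral_def)

lemma L_eq: "p \<in> TH \<Longrightarrow> (1 / real t) * ln (relval w mu p t) = emp_integral mu t (hh p)"
  by (cases "t = 0") (simp_all add: relval_exp2 emp_integral_def)

lemma emp_lin: "emp_integral mu t f = (\<Sum>x\<in>UNIV. f x * freq t x)"
proof -
  have "(\<Sum>s<t. f (mu s, mu (Suc s))) = (\<Sum>s<t. \<Sum>x\<in>UNIV. f x * (if (mu s, mu (Suc s)) = x then 1 else 0))"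
    by (intro sum.cong refl) (simp add: if_distrib cong: if_cong)
  also have "\<dots> = (\<Sum>x\<in>UNIV. f x * (\<Sum>s<t. (if (mu s, mu (Suc s)) = x then 1 else 0)))"
    by (simp add: sum.swap[of _ "{..<t}"] sum_distrib_left)
  finally show ?thesis unfolding freq_def emp_integral_def by (simp add: sum_distrib_left mult_ac)
qed

lemma exp_lin: "measure_pmf.expectation P f = (\<Sum>x\<in>UNIV. f x * pmf P x)"
  by (subst integral_measure_pmf[of UNIV]) (auto simp: mult_ac)

lemma freq_conv: "(\<lambda>t. freq t x) \<longlonglongrightarrow> pmf P x"
proof -
  have "(\<lambda>t. freq t x) \<longlonglongrightarrow> measure_pmf.expectation P (\<lambda>y. if y = x then 1 else 0)"
    using conv unfolding emp_weak_conv_def freq_def by blast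
  also have "measure_pmf.expectation P (\<lambda>y. if y = x then 1 else 0) = pmf P x"
  proof -
    have "(\<Sum>y\<in>UNIV. (if y = x then 1 else 0) * pmf P y) = (\<Sum>y\<in>UNIV. if y = x then pmf P y else 0)"
      by (intro sum.cong) auto
    then show ?thesis unfolding exp_lin by simp
  qed
  finally show ?thesis .
qed

definition Bd where "Bd = \<bar>ln rmin\<bar> + \<bar>ln rmax\<bar>"

lemma hh_bound: "p \<in> TH \<Longrightarrow> \<bar>hh p x\<bar> \<le> Bd"
proof -
  assume p: "p \<in> TH"
  have "ln rmin \<le> hh p x" unfolding hh_def
    by (subst ln_le_cancel_iff) (use gg_bounds[OF p] rmin_pos gg_pos[OF p] in auto)
  moreover have "hh p x \<le> ln rmax" unfolding hh_def
    by (subst ln_le_cancel_iff) (use gg_bounds[OF p] rmax_pos gg_pos[OF p] in auto)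
  ultimately show ?thesis unfolding Bd_def by linarith
qed

definition eps where "eps t = Bd * (\<Sum>x\<in>UNIV. \<bar>freq t x - pmf P x\<bar>)"

lemma eps_conv: "eps \<longlonglongrightarrow> 0"
proof -
  have "(\<lambda>t. Bd * (\<Sum>x\<in>UNIV. \<bar>freq t x - pmf P x\<bar>)) \<longlonglongrightarrow> Bd * (\<Sum>x\<in>(UNIV::('e\<times>'e) set). \<bar>pmf P x - pmf P x\<bar>)"
    by (intro tendsto_intros freq_conv)
  then show ?thesis by (simp add: eps_def[abs_def])
qed

lemma eps_unif: "p \<in> TH \<Longrightarrow> \<bar>emp_integral mu t (hh p) - Wf p\<bar> \<le> eps t"
proof -
  assume p: "p \<in> TH"
  have "emp_integral mu t (hh p) - Wf p = (\<Sum>x\<in>UNIV. hh p x * (freq t x - pmf P x))"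
    unfolding Wf_def emp_lin exp_lin by (simp add: sum_subtractf right_diff_distrib)
  also have "\<bar>\<dots>\<bar> \<le> (\<Sum>x\<in>UNIV. \<bar>hh p x * (freq t x - pmf P x)\<bar>)" by (rule sum_abs)
  also have "\<dots> \<le> (\<Sum>x\<in>UNIV. Bd * \<bar>freq t x - pmf P x\<bar>)"
    by (intro sum_mono) (simp add: abs_mult mult_right_mono hh_bound[OF p])
  finally show ?thesis by (simp add: eps_def sum_distrib_left)
qed

lemma relval_upper: "p \<in> TH \<Longrightarrow> relval w mu p t \<le> exp (real t * (Wf p + eps t))"
  using eps_unif[of p t] by (simp add: relval_exp2 mult_left_mono)

lemma relval_lower: "p \<in> TH \<Longrightarrow> exp (real t * (Wf p - eps t)) \<le> relval w mu p t"
  using eps_unif[of p t] by (simp add: relval_exp2 mult_left_mono)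

lemma W_conv: "p \<in> TH \<Longrightarrow> (\<lambda>t. (1 / real t) * ln (relval w mu p t)) \<longlonglongrightarrow> Wf p"
proof -
  assume p: "p \<in> TH"
  have "(\<lambda>t. (1 / real t) * ln (relval w mu p t)) = (\<lambda>t. emp_integral mu t (hh p))"
    using L_eq[OF p] by auto
  then show ?thesis using conv unfolding emp_weak_conv_def Wf_def by simp
qed

lemma gg_cont: "continuous_on TH (\<lambda>p. ln (gg w p e e'))"
proof -
  have "continuous_on TH (\<lambda>p. gg w p e e')" unfolding gg_def by (intro continuous_intros)
  then show ?thesis by (rule continuous_on_ln) (use gg_pos in \<open>metis less_irrefl\<close>)
qed

lemma Wf_cont: "continuous_on TH Wf"
proof -
  have "continuous_on TH (\<lambda>p. \<Sum>x\<in>UNIV. hh p x * pmf P x)"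
    unfolding hh_def by (intro continuous_intros gg_cont)
  then show ?thesis unfolding Wf_def exp_lin .
qed

lemma gg_lin: "gg w (u *\<^sub>R p + v *\<^sub>R q) e e' = u * gg w p e e' + v * gg w q e e'"
  unfolding gg_def by (simp add: sum.distrib sum_distrib_left algebra_simps)

lemma Wf_concave:
  assumes "p \<in> TH" "q \<in> TH" "0 \<le> u" "0 \<le> v" "u + v = 1"
  shows "u * Wf p + v * Wf q \<le> Wf (u *\<^sub>R p + v *\<^sub>R q)"
proof -
  have h: "u * hh p x + v * hh q x \<le> hh (u *\<^sub>R p + v *\<^sub>R q) x" for x
  proof -
    have "u * ln (gg w p (fst x) (snd x)) + v * ln (gg w q (fst x) (snd x))
       \<le> ln (u * gg w p (fst x) (snd x) + v * gg w q (fst x) (snd x))"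
      using ln_concave assms gg_pos[OF assms(1)] gg_pos[OF assms(2)]
      unfolding concave_on_iff by auto
    then show ?thesis unfolding hh_def gg_lin .
  qed
  have "u * Wf p + v * Wf q = (\<Sum>x\<in>UNIV. (u * hh p x + v * hh q x) * pmf P x)"
    unfolding Wf_def exp_lin by (simp add: sum.distrib sum_distrib_left algebra_simps)
  also have "\<dots> \<le> (\<Sum>x\<in>UNIV. hh (u *\<^sub>R p + v *\<^sub>R q) x * pmf P x)"
    by (intro sum_mono mult_right_mono h) simp
  also have "\<dots> = Wf (u *\<^sub>R p + v *\<^sub>R q)" unfolding Wf_def exp_lin ..
  finally show ?thesis .
qed

end

lemma G1:
  fixes x :: "nat \<Rightarrow> real"
  assumes "\<And>e. 0 < e \<Longrightarrow> eventually (\<lambda>t. x t \<le> exp (real t * (B + e))) sequentially"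
  shows "limsup (\<lambda>t. ereal (1 / real t) * ln_ereal (x t)) \<le> ereal B"
proof (rule ereal_le_epsilon2)
  fix e :: real assume e: "0 < e"
  have "eventually (\<lambda>t. ereal (1 / real t) * ln_ereal (x t) \<le> ereal (B + e)) sequentially"
    using assms[OF e] eventually_gt_at_top[of 0]
  proof eventually_elim
    case (elim t)
    show ?case
    proof (cases "x t \<le> 0")
      case True then show ?thesis using elim by (simp add: ln_ereal_def)
    next
      case False
      then have "ln (x t) \<le> ln (exp (real t * (B + e)))"
        using elim(1) by (subst ln_le_cancel_iff) auto
      then have "ln (x t) \<le> real t * (B + e)" by simp
      then have "(1 / real t) * ln (x t) \<le> B + e" using elim(2)
        by (simp add: field_simps)
      then show ?thesis using False by (simp add: ln_ereal_def)
    qed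
  qed
  then have "limsup (\<lambda>t. ereal (1 / real t) * ln_ereal (x t)) \<le> ereal (B + e)" by (rule Limsup_bounded)
  then show "limsup (\<lambda>t. ereal (1 / real t) * ln_ereal (x t)) \<le> ereal B + ereal e" by simp
qed

lemma G0:
  fixes x :: "nat \<Rightarrow> real"
  assumes "\<And>t. x t = 0"
  shows "limsup (\<lambda>t. ereal (1 / real t) * ln_ereal (x t)) \<le> - \<infinity>"
proof (rule Limsup_bounded)
  show "eventually (\<lambda>t. ereal (1 / real t) * ln_ereal (x t) \<le> - \<infinity>) sequentially"
    using eventually_gt_at_top[of 0]
    by eventually_elim (simp add: assms ln_ereal_def)
qed

lemma G2:
  fixes x :: "nat \<Rightarrow> real"
  assumes "\<And>e. 0 < e \<Longrightarrow> eventually (\<lambda>t. exp (real t * (B - e)) \<le> x t) sequentially"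
  shows "ereal B \<le> liminf (\<lambda>t. ereal (1 / real t) * ln_ereal (x t))"
proof (rule ereal_le_epsilon2)
  fix e :: real assume e: "0 < e"
  have "eventually (\<lambda>t. ereal (B - e) \<le> ereal (1 / real t) * ln_ereal (x t)) sequentially"
    using assms[OF e] eventually_gt_at_top[of 0]
  proof eventually_elim
    case (elim t)
    have xp: "0 < x t" using elim(1) by (meson exp_gt_zero less_le_trans)
    have "ln (exp (real t * (B - e))) \<le> ln (x t)"
      using elim(1) xp by (subst ln_le_cancel_iff) auto
    then have "real t * (B - e) \<le> ln (x t)" by simp
    then have "B - e \<le> (1 / real t) * ln (x t)" using elim(2)
      by (simp add: field_simps)
    then show ?case using xp by (simp add: ln_ereal_def)
  qed
  then have le: "ereal (B - e) \<le> liminf (\<lambda>t. ereal (1 / real t) * ln_ereal (x t))" by (rule Liminf_bounded)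
  have "ereal B = ereal (B - e) + ereal e" by simp
  also have "\<dots> \<le> liminf (\<lambda>t. ereal (1 / real t) * ln_ereal (x t)) + ereal e"
    using le by (rule add_right_mono)
  finally show "ereal B \<le> liminf (\<lambda>t. ereal (1 / real t) * ln_ereal (x t)) + ereal e" .
qed

lemma ev_real_ge: "eventually (\<lambda>t. c \<le> real t) sequentially"
proof -
  obtain N :: nat where "c \<le> real N" using real_arch_simple by blast
  then show ?thesis unfolding eventually_sequentially by (intro exI[of _ N]) auto
qed

context setting begin

lemma wealth_meas:
  assumes A: "A \<in> sets nu0"
  shows "measure (wealth_dist w mu nu0 t) A = (\<integral>x. indicator A x * relval w mu x t \<partial>nu0) / Vhat w mu nu0 t"
proof -
  let ?V = "Vhat w mu nu0 t"
  have V: "0 < ?V" by (rule Vhat_pos)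
  have int: "integrable nu0 (\<lambda>x. indicator A x * relval w mu x t / ?V)"
    using relval_int_ind[OF A, of t] by simp
  have nn: "AE x in nu0. 0 \<le> indicator A x * relval w mu x t / ?V"
    using AE_Theta
  proof eventually_elim
    case (elim x)
    have "0 \<le> indicator A x * relval w mu x t"
      using relval_pos[OF elim, of t] by (simp add: indicator_def)
    then show ?case using V by simp
  qed
  have "emeasure (wealth_dist w mu nu0 t) A = (\<integral>\<^sup>+x. ennreal (relval w mu x t / ?V) * indicator A x \<partial>nu0)"
    unfolding wealth_dist_def by (rule emeasure_density) (use A in auto)
  also have "\<dots> = (\<integral>\<^sup>+x. ennreal (indicator A x * relval w mu x t / ?V) \<partial>nu0)"
    by (intro nn_integral_cong) (auto split: split_indicator)
  also have "\<dots> = ennreal (\<integral>x. indicator A x * relval w mu x t / ?V \<partial>nu0)"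
    by (rule nn_integral_eq_integral[OF int nn])
  finally have "measure (wealth_dist w mu nu0 t) A = enn2real (ennreal (\<integral>x. indicator A x * relval w mu x t / ?V \<partial>nu0))"
    by (simp add: measure_def)
  also have "\<dots> = (\<integral>x. indicator A x * relval w mu x t / ?V \<partial>nu0)"
    using integral_nonneg_AE[OF nn] by simp
  finally show ?thesis by simp
qed

end

context setting2 begin

lemma pstar_ex: "\<exists>p\<in>TH. \<forall>q\<in>TH. Wf q \<le> Wf p"
  by (rule continuous_attains_sup[OF Theta_compact Theta_ne Wf_cont])

definition pstar where "pstar = (SOME p. p \<in> TH \<and> (\<forall>q\<in>TH. Wf q \<le> Wf p))"

lemma pstar: "pstar \<in> TH" "\<And>q. q \<in> TH \<Longrightarrow> Wf q \<le> Wf pstar"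
  using someI_ex[of "\<lambda>p. p \<in> TH \<and> (\<forall>q\<in>TH. Wf q \<le> Wf p)"] pstar_ex
  unfolding pstar_def by blast+

abbreviation "Ws \<equiv> Wf pstar"

lemma Vhat_upper: "Vhat w mu nu0 t \<le> exp (real t * (Ws + eps t))"
proof -
  have "Vstar w mu t \<le> exp (real t * (Ws + eps t))"
  proof (rule Vstar_le)
    fix p assume p: "p \<in> TH"
    have "relval w mu p t \<le> exp (real t * (Wf p + eps t))" by (rule relval_upper[OF p])
    also have "\<dots> \<le> exp (real t * (Ws + eps t))"
      using pstar(2)[OF p] by (simp add: mult_left_mono)
    finally show "relval w mu p t \<le> exp (real t * (Ws + eps t))" .
  qed
  then show ?thesis using Vhat_le_Vstar[of t] by linarith
qed

lemma pow_exp: "0 < d \<Longrightarrow> d < 1 \<Longrightarrow> (1 - d) ^ t = exp (real t * ln (1 - d))"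
  by (simp add: exp_of_nat_mult[symmetric] ln_realpow[symmetric] del: exp_of_nat_mult)

lemma ldp_upper:
  assumes F: "closed F" and ne: "F \<inter> TH \<noteq> {}"
  shows "\<exists>x0\<in>F \<inter> TH. limsup (\<lambda>t. ereal (1 / real t) * ln_ereal (measure (wealth_dist w mu nu0 t) (F \<inter> TH)))
            \<le> ereal (Wf x0 - Ws)"
proof -
  have K: "compact (F \<inter> TH)" using F Theta_compact by (rule closed_Int_compact)
  obtain x0 where x0: "x0 \<in> F \<inter> TH" "\<And>y. y \<in> F \<inter> TH \<Longrightarrow> Wf y \<le> Wf x0"
    using continuous_attains_sup[OF K ne continuous_on_subset[OF Wf_cont]] by blast
  have Ks: "F \<inter> TH \<in> sets nu0" by (rule sets.Int[OF _ Theta_sets]) (simp add: nu0_borel F borel_closed)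
  have "limsup (\<lambda>t. ereal (1 / real t) * ln_ereal (measure (wealth_dist w mu nu0 t) (F \<inter> TH)))
            \<le> ereal (Wf x0 - Ws)"
  proof (rule G1)
    fix e :: real assume e: "0 < e"
    define d where "d = 1 - exp (- (e/3))"
    have d: "0 < d" "d < 1" using e by (auto simp: d_def)
    have ld: "ln (1 - d) = - (e/3)" by (simp add: d_def)
    obtain m where m: "m > 0" "\<And>t p. p \<in> TH \<Longrightarrow> m * ((1 - d) ^ t * relval w mu p t) \<le> Vhat w mu nu0 t"
      using Vhat_lower[OF d] by auto
    have ev1: "eventually (\<lambda>t. eps t < e/6) sequentially"
      using eps_conv e by (intro order_tendstoD(2)) auto
    have ev2: "eventually (\<lambda>t. - ln m / (e/3) \<le> real t) sequentially" by (rule ev_real_ge)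
    show "eventually (\<lambda>t. measure (wealth_dist w mu nu0 t) (F \<inter> TH) \<le> exp (real t * (Wf x0 - Ws + e))) sequentially"
      using ev1 ev2
    proof eventually_elim
      case (elim t)
      have te: "real t * eps t \<le> real t * (e/6)" using elim(1) by (intro mult_left_mono) auto
      have tm: "- ln m \<le> real t * (e/3)" using elim(2) e by (simp add: field_simps)
      have Iu: "(\<integral>x. indicator (F \<inter> TH) x * relval w mu x t \<partial>nu0) \<le> exp (real t * (Wf x0 + eps t))"
      proof (rule int_upper[OF Ks])
        fix x assume x: "x \<in> F \<inter> TH \<inter> TH"
        have "relval w mu x t \<le> exp (real t * (Wf x + eps t))" using x by (intro relval_upper) auto
        also have "\<dots> \<le> exp (real t * (Wf x0 + eps t))" using x0(2)[of x] x by (simp add: mult_left_mono)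
        finally show "relval w mu x t \<le> exp (real t * (Wf x0 + eps t))" .
      qed simp
      have "exp (ln m + real t * ln (1 - d) + real t * (Ws - eps t)) = m * ((1 - d) ^ t * exp (real t * (Ws - eps t)))"
        using m(1) d by (simp add: exp_add pow_exp)
      also have "\<dots> \<le> m * ((1 - d) ^ t * relval w mu pstar t)"
        using m(1) d relval_lower[OF pstar(1), of t] by (intro mult_left_mono) auto
      also have "\<dots> \<le> Vhat w mu nu0 t" by (rule m(2)[OF pstar(1)])
      finally have Vl: "exp (ln m + real t * ln (1 - d) + real t * (Ws - eps t)) \<le> Vhat w mu nu0 t" .
      have "measure (wealth_dist w mu nu0 t) (F \<inter> TH) = (\<integral>x. indicator (F \<inter> TH) x * relval w mu x t \<partial>nu0) / Vhat w mu nu0 t"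
        by (rule wealth_meas[OF Ks])
      also have "\<dots> \<le> exp (real t * (Wf x0 + eps t)) / exp (ln m + real t * ln (1 - d) + real t * (Ws - eps t))"
        by (rule frac_le[OF _ Iu _ Vl]) auto
      also have "\<dots> = exp (real t * (Wf x0 + eps t) - (ln m + real t * ln (1 - d) + real t * (Ws - eps t)))"
        by (rule exp_diff[symmetric])
      also have "\<dots> \<le> exp (real t * (Wf x0 - Ws + e))"
        using te tm unfolding exp_le_cancel_iff ld by (simp add: algebra_simps)
      finally show ?case .
    qed
  qed
  then show ?thesis using x0(1) by blast
qed

lemma ldp_lower:
  assumes G: "open G" and q: "q \<in> G \<inter> TH"
  shows "ereal (Wf q - Ws) \<le> liminf (\<lambda>t. ereal (1 / real t) * ln_ereal (measure (wealth_dist w mu nu0 t) (G \<inter> TH)))"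
proof (rule G2)
  fix e :: real assume e: "0 < e"
  obtain rho where rho: "0 < rho" "ball q rho \<subseteq> G" using G q open_contains_ball by blast
  have Gs: "G \<inter> TH \<in> sets nu0" by (rule sets.Int[OF _ Theta_sets]) (simp add: nu0_borel G borel_open)
  define d where "d = min (1/2) (min (1 - exp (- (e/3))) (rho * (real CARD('n) * rmax) / rmin))"
  have d: "0 < d" "d < 1" using e rho rmin_pos rmax_pos by (auto simp: d_def)
  have "exp (- (e/3)) \<le> 1 - d" unfolding d_def by linarith
  then have ld: "- (e/3) \<le> ln (1 - d)" using d by (subst ln_ge_iff) auto
  define eta where "eta = d * rmin / (real CARD('n) * rmax)"
  have eta: "0 < eta" unfolding eta_def using eta_pos d by simp
  have eta_le: "eta \<le> rho"
  proof -
    have "d \<le> rho * (real CARD('n) * rmax) / rmin" unfolding d_def by linarith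
    then show ?thesis unfolding eta_def using rmin_pos rmax_pos by (simp add: field_simps)
  qed
  define mq where "mq = P.prob (ball q eta \<inter> TH)"
  have mq: "0 < mq" unfolding mq_def
  proof (rule pos_open)
    have "q \<in> ball q eta \<inter> TH" using q eta by simp
    then show "ball q eta \<inter> TH \<noteq> {}" by blast
  qed simp
  have ev1: "eventually (\<lambda>t. eps t < e/6) sequentially"
    using eps_conv e by (intro order_tendstoD(2)) auto
  have ev2: "eventually (\<lambda>t. - ln mq / (e/3) \<le> real t) sequentially" by (rule ev_real_ge)
  show "eventually (\<lambda>t. exp (real t * (Wf q - Ws - e)) \<le> measure (wealth_dist w mu nu0 t) (G \<inter> TH)) sequentially"
    using ev1 ev2
  proof eventually_elim
    case (elim t)
    have te: "real t * eps t \<le> real t * (e/6)" using elim(1) by (intro mult_left_mono) auto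
    have tm: "- ln mq \<le> real t * (e/3)" using elim(2) e by (simp add: field_simps)
    have tl: "real t * (- (e/3)) \<le> real t * ln (1 - d)" using ld by (intro mult_left_mono) auto
    have L: "0 \<le> (1 - d) ^ t * relval w mu q t" using d relval_pos[of q t] q by simp
    have "exp (ln mq + real t * ln (1 - d) + real t * (Wf q - eps t)) = mq * ((1 - d) ^ t * exp (real t * (Wf q - eps t)))"
      using mq d by (simp add: exp_add pow_exp)
    also have "\<dots> \<le> mq * ((1 - d) ^ t * relval w mu q t)"
      using mq d relval_lower[of q t] q by (intro mult_left_mono) auto
    also have "\<dots> \<le> (\<integral>x. indicator (G \<inter> TH) x * relval w mu x t \<partial>nu0)"
      unfolding mq_def
    proof (rule int_lower[OF Gs _ _ L])
      show "ball q eta \<in> sets nu0" by (simp add: nu0_borel)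
      show "ball q eta \<inter> TH \<subseteq> G \<inter> TH" using rho(2) eta_le by auto
      fix x assume x: "x \<in> ball q eta \<inter> TH"
      show "(1 - d) ^ t * relval w mu q t \<le> relval w mu x t"
        by (rule relval_ratio) (use x q d in \<open>auto simp: eta_def dist_commute\<close>)
    qed
    finally have Il: "exp (ln mq + real t * ln (1 - d) + real t * (Wf q - eps t)) \<le> (\<integral>x. indicator (G \<inter> TH) x * relval w mu x t \<partial>nu0)" .
    have "exp (real t * (Wf q - Ws - e)) \<le> exp ((ln mq + real t * ln (1 - d) + real t * (Wf q - eps t)) - real t * (Ws + eps t))"
      using te tm tl unfolding exp_le_cancel_iff by (simp add: algebra_simps)
    also have "\<dots> = exp (ln mq + real t * ln (1 - d) + real t * (Wf q - eps t)) / exp (real t * (Ws + eps t))"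
      by (rule exp_diff)
    also have "\<dots> \<le> (\<integral>x. indicator (G \<inter> TH) x * relval w mu x t \<partial>nu0) / Vhat w mu nu0 t"
      by (rule frac_le[OF _ Il Vhat_pos Vhat_upper]) (rule order_trans[OF _ Il], simp)
    also have "\<dots> = measure (wealth_dist w mu nu0 t) (G \<inter> TH)"
      by (rule wealth_meas[OF Gs, symmetric])
    finally show ?case .
  qed
qed

end

theorem theorem3p3:
  fixes w :: "'e::finite \<Rightarrow> real^'n"
    and mu :: "nat \<Rightarrow> 'e"
    and nu0 :: "(real^'n^'e) measure"
  assumes n2: "CARD('n) \<ge> 2"
    and w_inj: "inj w"
    and w_simplex: "\<And>e. w e \<in> open_simplex"
    and nu0_borel: "sets nu0 = sets borel"
    and nu0_prob: "prob_space nu0"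
    and nu0_supp: "full_support nu0 Theta"
  shows "((\<lambda>t. (1 / real t) * ln (Vhat w mu nu0 t / Vstar w mu t)) \<longlonglongrightarrow> 0) \<and>
    (\<forall>P. emp_weak_conv mu P \<longrightarrow>
      (\<forall>p\<in>Theta. convergent (\<lambda>t. (1 / real t) * ln (relval w mu p t))) \<and>
      (let W = (\<lambda>p. lim (\<lambda>t. (1 / real t) * ln (relval w mu p t)));
           Wstar = (SUP p\<in>Theta. W p);
           I = (\<lambda>p. Wstar - W p)
       in (\<exists>p\<in>Theta. W p = Wstar) \<and> convex_on Theta I \<and> rate_function Theta I \<and>
          LDP (wealth_dist w mu nu0) Theta I))"
proof -
  interpret setting w mu nu0 using w_simplex nu0_borel nu0_prob nu0_supp by (simp add: setting_def)
  have part1: "((\<lambda>t. (1 / real t) * ln (Vhat w mu nu0 t / Vstar w mu t)) \<longlonglongrightarrow> 0)"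
    by (rule universality)
  have part2: "emp_weak_conv mu P \<longrightarrow>
      (\<forall>p\<in>Theta. convergent (\<lambda>t. (1 / real t) * ln (relval w mu p t))) \<and>
      (let W = (\<lambda>p. lim (\<lambda>t. (1 / real t) * ln (relval w mu p t)));
           Wstar = (SUP p\<in>Theta. W p);
           I = (\<lambda>p. Wstar - W p)
       in (\<exists>p\<in>Theta. W p = Wstar) \<and> convex_on Theta I \<and> rate_function Theta I \<and>
          LDP (wealth_dist w mu nu0) Theta I)" for P
  proof
    assume cP: "emp_weak_conv mu P"
    interpret S2: setting2 w mu nu0 P by unfold_locales (rule cP)
    define W where "W = (\<lambda>p. lim (\<lambda>t. (1 / real t) * ln (relval w mu p t)))"
    have WW: "W p = S2.Wf p" if "p \<in> TH" for p
      unfolding W_def by (rule limI[OF S2.W_conv[OF that]])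
    have cvg: "\<forall>p\<in>Theta. convergent (\<lambda>t. (1 / real t) * ln (relval w mu p t))"
      using S2.W_conv by (auto intro: convergentI)
    have bdd: "bdd_above (S2.Wf ` TH)" using S2.pstar(2) by (intro bdd_aboveI[of _ "S2.Ws"]) auto
    have Wst: "(SUP p\<in>TH. W p) = S2.Ws"
    proof -
      have "(SUP p\<in>TH. W p) = (SUP p\<in>TH. S2.Wf p)" by (rule SUP_cong) (simp_all add: WW)
      also have "\<dots> = S2.Ws"
        by (intro antisym cSUP_least cSUP_upper Theta_ne S2.pstar bdd)
      finally show ?thesis .
    qed
    have a: "\<exists>p\<in>TH. W p = (SUP p\<in>TH. W p)" using S2.pstar(1) WW Wst by auto
    have b: "convex_on TH (\<lambda>p. (SUP p\<in>TH. W p) - W p)"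
      unfolding convex_on_def
    proof (intro conjI Theta_convex ballI allI impI)
      fix x y :: "real^'n^'e" and u v :: real
      assume xy: "x \<in> TH" "y \<in> TH" and uv: "0 \<le> u" "0 \<le> v" "u + v = 1"
      have z: "u *\<^sub>R x + v *\<^sub>R y \<in> TH" using Theta_convex xy uv by (rule convexD)
      have "u * S2.Wf x + v * S2.Wf y \<le> S2.Wf (u *\<^sub>R x + v *\<^sub>R y)"
        by (rule S2.Wf_concave[OF xy uv])
      then have "S2.Ws - S2.Wf (u *\<^sub>R x + v *\<^sub>R y) \<le> u * (S2.Ws - S2.Wf x) + v * (S2.Ws - S2.Wf y)"
      proof -
        have "u * (S2.Ws - S2.Wf x) + v * (S2.Ws - S2.Wf y) = (u + v) * S2.Ws - (u * S2.Wf x + v * S2.Wf y)"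
          by (simp add: algebra_simps)
        then show ?thesis using uv(3) \<open>u * S2.Wf x + v * S2.Wf y \<le> S2.Wf (u *\<^sub>R x + v *\<^sub>R y)\<close> by simp
      qed
      then show "(SUP p\<in>TH. W p) - W (u *\<^sub>R x + v *\<^sub>R y) \<le> u * ((SUP p\<in>TH. W p) - W x) + v * ((SUP p\<in>TH. W p) - W y)"
        unfolding Wst WW[OF z] WW[OF xy(1)] WW[OF xy(2)] .
    qed
    have c: "rate_function TH (\<lambda>p. (SUP p\<in>TH. W p) - W p)"
      unfolding rate_function_def
    proof (intro conjI ballI allI)
      fix x assume "x \<in> TH"
      then show "0 \<le> (SUP p\<in>TH. W p) - W x" unfolding Wst WW[OF \<open>x \<in> TH\<close>] using S2.pstar(2) by simp
    next
      fix c
      have "{x \<in> TH. (SUP p\<in>TH. W p) - W x \<le> c} = TH \<inter> (\<lambda>x. S2.Ws - S2.Wf x) -` {..c}"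
        unfolding Wst using WW by auto
      also have "closed \<dots>"
        by (rule continuous_closed_preimage[OF _ Theta_closed closed_atMost])
           (intro continuous_intros S2.Wf_cont)
      finally show "closed {x \<in> TH. (SUP p\<in>TH. W p) - W x \<le> c}" .
    qed
    have d: "LDP (wealth_dist w mu nu0) TH (\<lambda>p. (SUP p\<in>TH. W p) - W p)"
      unfolding LDP_def
    proof (intro conjI allI impI)
      fix F :: "(real^'n^'e) set" assume F: "closed F"
      have ic: "(INF x\<in>F \<inter> TH. ereal ((SUP p\<in>TH. W p) - W x)) = (INF x\<in>F \<inter> TH. ereal (S2.Ws - S2.Wf x))"
        unfolding Wst by (rule INF_cong) (simp_all add: WW)
      show "limsup (\<lambda>t. ereal (1 / real t) * ln_ereal (measure (wealth_dist w mu nu0 t) (F \<inter> TH)))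
            \<le> - (INF x\<in>F \<inter> TH. ereal ((SUP p\<in>TH. W p) - W x))"
      proof (cases "F \<inter> TH = {}")
        case True
        then show ?thesis using G0[of "\<lambda>t. measure (wealth_dist w mu nu0 t) (F \<inter> TH)"] by simp
      next
        case False
        then obtain x0 where x0: "x0 \<in> F \<inter> TH"
          "limsup (\<lambda>t. ereal (1 / real t) * ln_ereal (measure (wealth_dist w mu nu0 t) (F \<inter> TH))) \<le> ereal (S2.Wf x0 - S2.Ws)"
          using S2.ldp_upper[OF F] by blast
        have "(INF x\<in>F \<inter> TH. ereal (S2.Ws - S2.Wf x)) \<le> ereal (S2.Ws - S2.Wf x0)"
          by (rule INF_lower[OF x0(1)])
        then have "- ereal (S2.Ws - S2.Wf x0) \<le> - (INF x\<in>F \<inter> TH. ereal (S2.Ws - S2.Wf x))"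
          by (simp only: ereal_minus_le_minus)
        moreover have "- ereal (S2.Ws - S2.Wf x0) = ereal (S2.Wf x0 - S2.Ws)" by simp
        ultimately have "ereal (S2.Wf x0 - S2.Ws) \<le> - (INF x\<in>F \<inter> TH. ereal (S2.Ws - S2.Wf x))"
          by simp
        then show ?thesis unfolding ic using x0(2) by (rule order_trans[rotated])
      qed
    next
      fix G :: "(real^'n^'e) set" assume G: "open G"
      have ic: "(INF x\<in>G \<inter> TH. ereal ((SUP p\<in>TH. W p) - W x)) = (INF x\<in>G \<inter> TH. ereal (S2.Ws - S2.Wf x))"
        unfolding Wst by (rule INF_cong) (simp_all add: WW)
      show "- (INF x\<in>G \<inter> TH. ereal ((SUP p\<in>TH. W p) - W x))
          \<le> liminf (\<lambda>t. ereal (1 / real t) * ln_ereal (measure (wealth_dist w mu nu0 t) (G \<inter> TH)))"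
        unfolding ic ereal_uminus_le_reorder[of "INF x\<in>G \<inter> TH. ereal (S2.Ws - S2.Wf x)"]
      proof (rule INF_greatest)
        fix x assume x: "x \<in> G \<inter> TH"
        have "ereal (S2.Wf x - S2.Ws) \<le> liminf (\<lambda>t. ereal (1 / real t) * ln_ereal (measure (wealth_dist w mu nu0 t) (G \<inter> TH)))"
          by (rule S2.ldp_lower[OF G x])
        then show "- liminf (\<lambda>t. ereal (1 / real t) * ln_ereal (measure (wealth_dist w mu nu0 t) (G \<inter> TH)))
              \<le> ereal (S2.Ws - S2.Wf x)"
          by (simp add: ereal_uminus_le_reorder)
      qed
    qed
    have main: "(\<exists>p\<in>TH. W p = (SUP p\<in>TH. W p)) \<and> convex_on TH (\<lambda>p. (SUP p\<in>TH. W p) - W p) \<and>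
        rate_function TH (\<lambda>p. (SUP p\<in>TH. W p) - W p) \<and> LDP (wealth_dist w mu nu0) TH (\<lambda>p. (SUP p\<in>TH. W p) - W p)"
      using a b c d by blast
    show "(\<forall>p\<in>Theta. convergent (\<lambda>t. (1 / real t) * ln (relval w mu p t))) \<and>
      (let W = (\<lambda>p. lim (\<lambda>t. (1 / real t) * ln (relval w mu p t)));
           Wstar = (SUP p\<in>Theta. W p);
           I = (\<lambda>p. Wstar - W p)
       in (\<exists>p\<in>Theta. W p = Wstar) \<and> convex_on Theta I \<and> rate_function Theta I \<and>
          LDP (wealth_dist w mu nu0) Theta I)"
      unfolding Let_def
    proof (rule conjI[OF cvg])
      show "(\<exists>p\<in>Theta. lim (\<lambda>t. 1 / real t * ln (relval w mu p t)) = (SUP p\<in>Theta. lim (\<lambda>t. 1 / real t * ln (relval w mu p t)))) \<and>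
    convex_on Theta (\<lambda>p. (SUP p\<in>Theta. lim (\<lambda>t. 1 / real t * ln (relval w mu p t))) - lim (\<lambda>t. 1 / real t * ln (relval w mu p t))) \<and>
    rate_function Theta (\<lambda>p. (SUP p\<in>Theta. lim (\<lambda>t. 1 / real t * ln (relval w mu p t))) - lim (\<lambda>t. 1 / real t * ln (relval w mu p t))) \<and>
    LDP (wealth_dist w mu nu0) Theta (\<lambda>p. (SUP p\<in>Theta. lim (\<lambda>t. 1 / real t * ln (relval w mu p t))) - lim (\<lambda>t. 1 / real t * ln (relval w mu p t)))"
        using main unfolding W_def .
    qed
  qed
  show ?thesis using part1 part2 by blast
qed

end
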